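(* Let $n\ge1$, let $\Sigma$ be a finite alphabet and ${\it td}>0$ with $T=\lfloor n\cdot{\it td}\rfloor$ satisfying $n\le T\le n^2$. Consider a random automaton on $n$ states in which, for each symbol $a\in\Sigma$ independently, the set of $a$-labelled transitions is a uniformly random $T$-element subset of the $n^2$ possible pairs of states. Let $U(n,|\Sigma|,{\it td})$ be the probability that every state has at least one outgoing transition labelled by every symbol of $\Sigma$. Then $U(n,|\Sigma|,{\it td})=\big(\alpha(n,T)/\beta(n,T)\big)^{|\Sigma|}$, where $\beta(n,T)=\binom{n^2}{T}$ and $\alpha(n,T)=\sum_{m=n}^{n^2}\binom{m-n}{T-n}\sum_{i=0}^{n}(-1)^i\binom{n}{i}\binom{m-in-1}{n-1}$.
   Context: Binomial coefficient convention: $\binom{a}{b}=0$ whenever $a<b$ (including negative $a$). This is the Tabakov–Vardi random automaton model with $n$ states, alphabet $\Sigma$ and transition density ${\it td}$. *)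

theory Defs
  imports "HOL-Probability.Probability"
begin

definition ibinom :: "int \<Rightarrow> int \<Rightarrow> int" where
  "ibinom a b = (if a < b \<or> b < 0 then 0 else int (nat a choose nat b))"

text \<open>States are 0..n-1. A (transition structure of an) automaton assigns to each symbol
  of the alphabet a set of transitions (pairs of states); off the alphabet it is empty.\<close>
definition TV_autos :: "nat \<Rightarrow> 'a set \<Rightarrow> nat \<Rightarrow> ('a \<Rightarrow> (nat \<times> nat) set) set" where
  "TV_autos n \<Sigma> T = {\<delta>. (\<forall>a\<in>\<Sigma>. \<delta> a \<subseteq> {0..<n} \<times> {0..<n} \<and> card (\<delta> a) = T)
                           \<and> (\<forall>a. a \<notin> \<Sigma> \<longrightarrow> \<delta> a = {})}"

text \<open>Uniform distribution on the sample space: equivalently, for each symbol independently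
  a uniformly random T-subset of the n^2 pairs.\<close>
definition TV_random_aut :: "nat \<Rightarrow> 'a set \<Rightarrow> real \<Rightarrow> ('a \<Rightarrow> (nat \<times> nat) set) pmf" where
  "TV_random_aut n \<Sigma> td = pmf_of_set (TV_autos n \<Sigma> (nat \<lfloor>real n * td\<rfloor>))"

definition total_aut :: "nat \<Rightarrow> 'a set \<Rightarrow> ('a \<Rightarrow> (nat \<times> nat) set) \<Rightarrow> bool" where
  "total_aut n \<Sigma> \<delta> = (\<forall>q<n. \<forall>a\<in>\<Sigma>. \<exists>q'. (q, q') \<in> \<delta> a)"

definition U_prob :: "nat \<Rightarrow> 'a set \<Rightarrow> real \<Rightarrow> real" where
  "U_prob n \<Sigma> td = measure_pmf.prob (TV_random_aut n \<Sigma> td) {\<delta>. total_aut n \<Sigma> \<delta>}"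

definition alpha_TV :: "nat \<Rightarrow> nat \<Rightarrow> int" where
  "alpha_TV n T = (\<Sum>m = n..n^2. ibinom (int m - int n) (int T - int n) *
      (\<Sum>i = 0..n. (-1)^i * int (n choose i) * ibinom (int m - int i * int n - 1) (int n - 1)))"

definition beta_TV :: "nat \<Rightarrow> nat \<Rightarrow> nat" where
  "beta_TV n T = (n^2) choose T"

end

theory Submission
  imports Defs
begin

definition Lst :: "nat \<Rightarrow> nat \<Rightarrow> nat list set" where
  "Lst b r = {xs. set xs \<subseteq> {1..b} \<and> length xs = r}"

definition Ncnt :: "nat \<Rightarrow> nat \<Rightarrow> nat \<Rightarrow> nat" where
  "Ncnt b r m = card {xs \<in> Lst b r. sum_list xs = m}"

definition Ff :: "nat \<Rightarrow> nat \<Rightarrow> int \<Rightarrow> int" where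
  "Ff b r m = (\<Sum>i\<le>r. (-1)^i * int (r choose i) * ibinom (m - int i * int b - 1) (int r - 1))"

lemma finite_Lst[simp]: "finite (Lst b r)"
  using finite_lists_length_eq[of "{1..b}" r] unfolding Lst_def by simp

lemma Lst_Suc: "{xs \<in> Lst b (Suc r). sum_list xs = m} =
   (\<Union>k\<in>{k\<in>{1..b}. k \<le> m}. (Cons k) ` {ys \<in> Lst b r. sum_list ys = m - k})"
  unfolding Lst_def
  by (auto simp: length_Suc_conv)

lemma Ncnt_Suc: "Ncnt b (Suc r) m = (\<Sum>k=1..b. if k \<le> m then Ncnt b r (m-k) else 0)"
proof -
  have "Ncnt b (Suc r) m = (\<Sum>k\<in>{k\<in>{1..b}. k \<le> m}. card ((Cons k) ` {ys \<in> Lst b r. sum_list ys = m - k}))"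
    unfolding Ncnt_def Lst_Suc
    by (rule card_UN_disjoint) auto
  also have "\<dots> = (\<Sum>k\<in>{k\<in>{1..b}. k \<le> m}. Ncnt b r (m-k))"
    by (rule sum.cong) (auto simp: Ncnt_def card_image)
  also have "\<dots> = (\<Sum>k=1..b. if k \<le> m then Ncnt b r (m-k) else 0)"
    by (rule sum.inter_filter) simp
  finally show ?thesis .
qed

lemma Ncnt_0: "Ncnt b 0 m = (if m = 0 then 1 else 0)"
proof -
  have "{xs \<in> Lst b 0. sum_list xs = m} = (if m = 0 then {[]} else {})" by (auto simp: Lst_def)
  then show ?thesis unfolding Ncnt_def by simp
qed

lemma Ff_nonpos: assumes "m \<le> 0" shows "Ff b (Suc r) m = 0"
  unfolding Ff_def
proof (intro sum.neutral ballI)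
  fix i assume "i \<in> {..Suc r}"
  have "int i * int b \<ge> 0" by simp
  then have "m - int i * int b - 1 < int (Suc r) - 1" using assms by linarith
  then show "(- 1) ^ i * int (Suc r choose i) * ibinom (m - int i * int b - 1) (int (Suc r) - 1) = 0"
    unfolding ibinom_def by simp
qed

lemma ibinom_pascal: "ibinom a (int (Suc r)) = ibinom (a-1) (int (Suc r)) + ibinom (a-1) (int r)"
proof (cases "a \<le> int r")
  case True then show ?thesis unfolding ibinom_def by auto
next
  case False
  obtain k where k: "a = int (Suc k)" "k \<ge> r" using False
  proof -
    have "a = int (Suc (nat (a - 1)))" "nat (a-1) \<ge> r" using False by auto
    then show ?thesis using that by blast
  qed
  have e: "int (Suc k) - 1 = int k" by simp
  show ?thesis unfolding ibinom_def k(1) e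
    using k(2) by (auto simp del: of_nat_Suc)
qed

lemma hockey: "ibinom a (int (Suc r)) - ibinom (a - int b) (int (Suc r)) = (\<Sum>k=1..b. ibinom (a - int k) (int r))"
proof (induction b)
  case 0 then show ?case by simp
next
  case (Suc b)
  have "ibinom (a - int b) (int (Suc r)) = ibinom (a - int (Suc b)) (int (Suc r)) + ibinom (a - int (Suc b)) (int r)"
    using ibinom_pascal[of "a - int b" r] by (simp add: algebra_simps)
  then show ?case using Suc by simp
qed

lemma alt_lemma: fixes h :: "nat \<Rightarrow> int"
  shows "(\<Sum>i\<le>Suc r. (-1)^i * int (Suc r choose i) * h i) = (\<Sum>i\<le>r. (-1)^i * int (r choose i) * (h i - h (Suc i)))"
proof -
  have A: "(\<Sum>i\<le>r. (-1)^i * int (r choose i) * h (Suc i)) = - (\<Sum>i\<le>r. (-1)^(Suc i) * int (r choose i) * h (Suc i))"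
    by (simp add: sum_negf[symmetric])
  have B: "(\<Sum>i\<le>Suc r. (-1)^i * int (Suc r choose i) * h i) =
        h 0 + (\<Sum>i\<le>r. (-1)^(Suc i) * int (Suc r choose Suc i) * h (Suc i))"
    by (subst sum.atMost_Suc_shift) simp
  have C: "(\<Sum>i\<le>r. (-1)^i * int (r choose i) * h i) =
        h 0 + (\<Sum>i\<le>r. (-1)^(Suc i) * int (r choose Suc i) * h (Suc i))"
  proof -
    have "(\<Sum>i\<le>Suc r. (-1)^i * int (r choose i) * h i) = (\<Sum>i\<le>r. (-1)^i * int (r choose i) * h i)"
      by simp
    then show ?thesis by (subst (asm) sum.atMost_Suc_shift) simp
  qed
  have D: "(\<Sum>i\<le>r. (-1)^(Suc i) * int (Suc r choose Suc i) * h (Suc i)) =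
     (\<Sum>i\<le>r. (-1)^(Suc i) * int (r choose Suc i) * h (Suc i)) + (\<Sum>i\<le>r. (-1)^(Suc i) * int (r choose i) * h (Suc i))"
    unfolding sum.distrib[symmetric] by (rule sum.cong) (simp_all add: algebra_simps)
  show ?thesis
    unfolding B right_diff_distrib sum_subtractf A C D by linarith
qed

lemma Ncnt_formula: "int (Ncnt b (Suc r) m) = Ff b (Suc r) (int m)"
proof (induction r arbitrary: m)
  case 0
  have "Ncnt b 1 m = (\<Sum>k=1..b. if k = m then 1 else 0)"
    unfolding One_nat_def Ncnt_Suc Ncnt_0 by (rule sum.cong) auto
  also have "\<dots> = (if 1 \<le> m \<and> m \<le> b then 1 else 0)"
    by (simp add: sum.delta)
  finally have N: "Ncnt b 1 m = (if 1 \<le> m \<and> m \<le> b then 1 else 0)" .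
  have F: "Ff b (Suc 0) (int m) = ibinom (int m - 1) 0 - ibinom (int m - int b - 1) 0"
    unfolding Ff_def by simp
  have I: "\<And>x. ibinom x 0 = (if x < 0 then 0 else 1)" unfolding ibinom_def by simp
  show ?case unfolding F I using N by auto
next
  case (Suc r)
  have "int (Ncnt b (Suc (Suc r)) m) = (\<Sum>k=1..b. Ff b (Suc r) (int m - int k))"
    unfolding Ncnt_Suc[of b "Suc r"] of_nat_sum
  proof (rule sum.cong)
    fix k assume "k \<in> {1..b}"
    show "int (if k \<le> m then Ncnt b (Suc r) (m - k) else 0) = Ff b (Suc r) (int m - int k)"
    proof (cases "k \<le> m")
      case True then show ?thesis using Suc.IH[of "m-k"] by (simp add: of_nat_diff)
    next
      case False then show ?thesis using Ff_nonpos[of "int m - int k" b r] by simp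
    qed
  qed simp
  also have "\<dots> = (\<Sum>k=1..b. \<Sum>i\<le>Suc r. (-1)^i * int (Suc r choose i) * ibinom (int m - int i * int b - 1 - int k) (int r))"
  proof (rule sum.cong[OF refl])
    fix k
    have e: "\<And>i. int m - int k - int i * int b - 1 = int m - int i * int b - 1 - int k" by simp
    show "Ff b (Suc r) (int m - int k) = (\<Sum>i\<le>Suc r. (-1)^i * int (Suc r choose i) * ibinom (int m - int i * int b - 1 - int k) (int r))"
      unfolding Ff_def e by simp
  qed
  also have "\<dots> = (\<Sum>i\<le>Suc r. \<Sum>k=1..b. (-1)^i * int (Suc r choose i) * ibinom (int m - int i * int b - 1 - int k) (int r))"
    by (rule sum.swap)
  also have "\<dots> = (\<Sum>i\<le>Suc r. (-1)^i * int (Suc r choose i) * (\<Sum>k=1..b. ibinom (int m - int i * int b - 1 - int k) (int r)))"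
    by (simp only: sum_distrib_left)
  also have "\<dots> = (\<Sum>i\<le>Suc r. (-1)^i * int (Suc r choose i) * (ibinom (int m - int i * int b - 1) (int (Suc r)) - ibinom (int m - int (Suc i) * int b - 1) (int (Suc r))))"
  proof (rule sum.cong[OF refl])
    fix i
    have e: "int m - int (Suc i) * int b - 1 = int m - int i * int b - 1 - int b" by (simp add: algebra_simps)
    show "(-1)^i * int (Suc r choose i) * (\<Sum>k=1..b. ibinom (int m - int i * int b - 1 - int k) (int r)) =
      (-1)^i * int (Suc r choose i) * (ibinom (int m - int i * int b - 1) (int (Suc r)) - ibinom (int m - int (Suc i) * int b - 1) (int (Suc r)))"
      unfolding e hockey[of "int m - int i * int b - 1" r b] ..
  qed
  also have "\<dots> = (\<Sum>i\<le>Suc (Suc r). (-1)^i * int (Suc (Suc r) choose i) * ibinom (int m - int i * int b - 1) (int (Suc r)))"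
    by (rule alt_lemma[where h = "\<lambda>i. ibinom (int m - int i * int b - 1) (int (Suc r))", symmetric])
  also have "\<dots> = Ff b (Suc (Suc r)) (int m)"
    unfolding Ff_def by (intro sum.cong refl) simp
  finally show ?case .
qed

lemma sum_list_bound: "set xs \<subseteq> {1..b} \<Longrightarrow> sum_list xs \<le> length xs * b"
  by (induction xs) auto

lemma group_Lst: fixes g :: "nat \<Rightarrow> int"
  shows "(\<Sum>xs\<in>Lst b r. g (sum_list xs)) = (\<Sum>m=0..r*b. g m * int (Ncnt b r m))"
proof -
  have "(\<Sum>xs\<in>Lst b r. g (sum_list xs)) = (\<Sum>m=0..r*b. \<Sum>xs\<in>{xs\<in>Lst b r. sum_list xs = m}. g (sum_list xs))"
  proof (rule sum.group[symmetric])
    show "sum_list ` Lst b r \<subseteq> {0..r * b}"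
    proof
      fix y assume "y \<in> sum_list ` Lst b r"
      then obtain xs where "xs \<in> Lst b r" "y = sum_list xs" by blast
      then show "y \<in> {0..r*b}" using sum_list_bound[of xs b] unfolding Lst_def by auto
    qed
  qed simp_all
  also have "\<dots> = (\<Sum>m=0..r*b. g m * int (Ncnt b r m))"
    by (intro sum.cong refl) (simp add: Ncnt_def)
  finally show ?thesis .
qed

definition Mx :: "nat list \<Rightarrow> (nat \<times> nat) set" where
  "Mx xs = (\<lambda>r. (r, xs!r - 1)) ` {0..<length xs}"
definition Dx :: "nat list \<Rightarrow> (nat \<times> nat) set" where
  "Dx xs = Sigma {0..<length xs} (\<lambda>r. {0..<xs!r - 1})"
definition Gs :: "nat \<Rightarrow> nat \<Rightarrow> (nat \<times> nat) set set" where
  "Gs n T = {B. B \<subseteq> {0..<n}\<times>{0..<n} \<and> card B = T \<and> (\<forall>q<n. \<exists>q'. (q,q')\<in>B)}"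
definition Cl :: "nat list \<Rightarrow> nat \<Rightarrow> (nat \<times> nat) set set" where
  "Cl xs T = {B. Mx xs \<subseteq> B \<and> B \<subseteq> Dx xs \<union> Mx xs \<and> card B = T}"

lemma Lst_nth: "xs \<in> Lst b r \<Longrightarrow> i < r \<Longrightarrow> xs ! i \<in> {1..b}"
  unfolding Lst_def using nth_mem by blast

lemma Gs_UN: "Gs n T = (\<Union>xs\<in>Lst n n. Cl xs T)"
proof
  show "(\<Union>xs\<in>Lst n n. Cl xs T) \<subseteq> Gs n T"
  proof
    fix B assume "B \<in> (\<Union>xs\<in>Lst n n. Cl xs T)"
    then obtain xs where xs: "xs \<in> Lst n n" and B: "B \<in> Cl xs T" by blast
    have len: "length xs = n" using xs by (simp add: Lst_def)
    have sub: "B \<subseteq> {0..<n}\<times>{0..<n}"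
    proof
      fix p assume "p \<in> B"
      then have "p \<in> Dx xs \<union> Mx xs" using B by (auto simp: Cl_def)
      then obtain r c where p: "p = (r,c)" "r < n" "c \<le> xs!r - 1"
        unfolding Dx_def Mx_def len by auto
      then have "xs!r \<in> {1..n}" using Lst_nth[OF xs] by auto
      then show "p \<in> {0..<n}\<times>{0..<n}" using p by auto
    qed
    have "\<forall>q<n. \<exists>q'. (q,q')\<in>B"
    proof (intro allI impI)
      fix q assume "q < n"
      then have "(q, xs!q - 1) \<in> Mx xs" unfolding Mx_def len by auto
      then show "\<exists>q'. (q,q')\<in>B" using B by (auto simp: Cl_def)
    qed
    then show "B \<in> Gs n T" using sub B by (auto simp: Gs_def Cl_def)
  qed
next
  show "Gs n T \<subseteq> (\<Union>xs\<in>Lst n n. Cl xs T)"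
  proof
    fix B assume B: "B \<in> Gs n T"
    define S where "S r = {c. (r,c) \<in> B}" for r
    have fin: "finite (S r)" for r
    proof -
      have "S r \<subseteq> {0..<n}" using B by (auto simp: Gs_def S_def)
      then show ?thesis using finite_subset by blast
    qed
    have ne: "S r \<noteq> {}" if "r < n" for r using B that by (auto simp: Gs_def S_def)
    have mx: "Max (S r) \<in> S r" if "r < n" for r using Max_in[OF fin ne[OF that]] .
    have mxl: "Max (S r) < n" if "r < n" for r using mx[OF that] B by (auto simp: Gs_def S_def)
    define xs where "xs = map (\<lambda>r. Max (S r) + 1) [0..<n]"
    have len: "length xs = n" by (simp add: xs_def)
    have nth: "xs ! r = Max (S r) + 1" if "r < n" for r using that by (simp add: xs_def)
    have "xs \<in> Lst n n" unfolding Lst_def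
    proof (intro CollectI conjI subsetI)
      fix x assume "x \<in> set xs"
      then obtain r where "r < n" "x = xs ! r" by (auto simp: in_set_conv_nth len)
      then show "x \<in> {1..n}" using nth mxl by fastforce
    qed (simp add: len)
    moreover have "B \<in> Cl xs T" unfolding Cl_def
    proof (intro CollectI conjI)
      show "Mx xs \<subseteq> B" unfolding Mx_def len using mx nth by (auto simp: S_def)
      show "B \<subseteq> Dx xs \<union> Mx xs"
      proof
        fix p assume p: "p \<in> B"
        then obtain r c where rc: "p = (r,c)" "r < n" using B by (auto simp: Gs_def)
        then have "c \<in> S r" using p by (simp add: S_def)
        then have "c \<le> Max (S r)" using fin by simp
        then show "p \<in> Dx xs \<union> Mx xs" using rc nth[OF rc(2)] unfolding Dx_def Mx_def len
          by (cases "c = Max (S r)") auto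
      qed
      show "card B = T" using B by (simp add: Gs_def)
    qed
    ultimately show "B \<in> (\<Union>xs\<in>Lst n n. Cl xs T)" by blast
  qed
qed

lemma Cl_disj:
  assumes xs: "xs \<in> Lst n n" and ys: "ys \<in> Lst n n" and ne: "xs \<noteq> ys"
  shows "Cl xs T \<inter> Cl ys T = {}"
proof (rule ccontr)
  assume "Cl xs T \<inter> Cl ys T \<noteq> {}"
  then obtain B where B1: "B \<in> Cl xs T" and B2: "B \<in> Cl ys T" by blast
  have lx: "length xs = n" and ly: "length ys = n" using xs ys by (auto simp: Lst_def)
  have le: "u ! r \<le> v ! r" if u: "u \<in> Lst n n" and v: "v \<in> Lst n n" and
     Bu: "B \<in> Cl u T" and Bv: "B \<in> Cl v T" and r: "r < n" for u v r
  proof -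
    have lu: "length u = n" and lv: "length v = n" using u v by (auto simp: Lst_def)
    have "(r, u!r - 1) \<in> Mx u" unfolding Mx_def lu using r by auto
    then have "(r, u!r - 1) \<in> Dx v \<union> Mx v" using Bu Bv by (auto simp: Cl_def)
    then have "u!r - 1 \<le> v!r - 1" unfolding Dx_def Mx_def lv by auto
    moreover have "u!r \<ge> 1" "v!r \<ge> 1" using Lst_nth[OF u r] Lst_nth[OF v r] by auto
    ultimately show ?thesis by linarith
  qed
  have "xs = ys"
  proof (rule nth_equalityI)
    show "length xs = length ys" using lx ly by simp
    fix i assume "i < length xs"
    then have "i < n" using lx by simp
    then show "xs ! i = ys ! i" using le[OF xs ys B1 B2] le[OF ys xs B2 B1] by (meson antisym)
  qed
  then show False using ne by simp
qed

lemma card_Mx: "card (Mx xs) = length xs"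
  unfolding Mx_def by (subst card_image) (auto simp: inj_on_def)

lemma finite_Dx: "finite (Dx xs)" unfolding Dx_def by auto
lemma finite_Mx: "finite (Mx xs)" unfolding Mx_def by auto

lemma Dx_Mx_disj: "Dx xs \<inter> Mx xs = {}"
  unfolding Dx_def Mx_def by auto

lemma card_Cl: assumes "length xs \<le> T"
  shows "card (Cl xs T) = card (Dx xs) choose (T - length xs)"
proof -
  have "Cl xs T = (\<lambda>B'. B' \<union> Mx xs) ` {B'. B' \<subseteq> Dx xs \<and> card B' = T - length xs}"
  proof
    show "(\<lambda>B'. B' \<union> Mx xs) ` {B'. B' \<subseteq> Dx xs \<and> card B' = T - length xs} \<subseteq> Cl xs T"
    proof
      fix B assume "B \<in> (\<lambda>B'. B' \<union> Mx xs) ` {B'. B' \<subseteq> Dx xs \<and> card B' = T - length xs}"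
      then obtain B' where B': "B' \<subseteq> Dx xs" "card B' = T - length xs" "B = B' \<union> Mx xs" by blast
      have "finite B'" using B'(1) finite_Dx finite_subset by blast
      moreover have "B' \<inter> Mx xs = {}" using B'(1) Dx_Mx_disj by blast
      ultimately have "card B = card B' + card (Mx xs)" using B'(3) finite_Mx card_Un_disjoint by blast
      then have "card B = T" using B'(2) card_Mx assms by simp
      then show "B \<in> Cl xs T" using B' by (auto simp: Cl_def)
    qed
  next
    show "Cl xs T \<subseteq> (\<lambda>B'. B' \<union> Mx xs) ` {B'. B' \<subseteq> Dx xs \<and> card B' = T - length xs}"
    proof
      fix B assume B: "B \<in> Cl xs T"
      have fB: "finite B" using B finite_Dx finite_Mx by (auto simp: Cl_def intro: finite_subset)
      have "card (B - Mx xs) = card B - card (Mx xs)"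
        using B by (intro card_Diff_subset finite_Mx) (auto simp: Cl_def)
      then have "card (B - Mx xs) = T - length xs" using B card_Mx by (simp add: Cl_def)
      moreover have "B - Mx xs \<subseteq> Dx xs" using B by (auto simp: Cl_def)
      moreover have "B = (B - Mx xs) \<union> Mx xs" using B by (auto simp: Cl_def)
      ultimately show "B \<in> (\<lambda>B'. B' \<union> Mx xs) ` {B'. B' \<subseteq> Dx xs \<and> card B' = T - length xs}" by blast
    qed
  qed
  moreover have "inj_on (\<lambda>B'. B' \<union> Mx xs) {B'. B' \<subseteq> Dx xs \<and> card B' = T - length xs}"
  proof (rule inj_onI)
    fix B1 B2 assume "B1 \<in> {B'. B' \<subseteq> Dx xs \<and> card B' = T - length xs}" "B2 \<in> {B'. B' \<subseteq> Dx xs \<and> card B' = T - length xs}"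
      "B1 \<union> Mx xs = B2 \<union> Mx xs"
    then show "B1 = B2" using Dx_Mx_disj by blast
  qed
  ultimately show ?thesis using n_subsets[OF finite_Dx] by (simp add: card_image)
qed

lemma card_Dx: "set xs \<subseteq> {1..b} \<Longrightarrow> card (Dx xs) + length xs = sum_list xs"
proof -
  assume A: "set xs \<subseteq> {1..b}"
  have "card (Dx xs) = (\<Sum>r=0..<length xs. xs!r - 1)" unfolding Dx_def by simp
  moreover have "(\<Sum>r=0..<length xs. xs!r - 1 + 1) = (\<Sum>r=0..<length xs. xs!r - 1) + length xs"
    by (simp only: sum.distrib) simp
  ultimately have "card (Dx xs) + length xs = (\<Sum>r=0..<length xs. xs!r - 1 + 1)"
    by simp
  also have "\<dots> = (\<Sum>r=0..<length xs. xs!r)"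
  proof (rule sum.cong[OF refl])
    fix r assume "r \<in> {0..<length xs}"
    then have "xs!r \<in> {1..b}" using A nth_mem by fastforce
    then show "xs!r - 1 + 1 = xs!r" by simp
  qed
  also have "\<dots> = sum_list xs" by (simp add: sum_list_sum_nth)
  finally show ?thesis .
qed

lemma card_Gs: assumes "n \<le> T"
  shows "card (Gs n T) = (\<Sum>xs\<in>Lst n n. card (Dx xs) choose (T - n))"
proof -
  have "card (Gs n T) = (\<Sum>xs\<in>Lst n n. card (Cl xs T))"
    unfolding Gs_UN
  proof (rule card_UN_disjoint)
    show "\<forall>xs\<in>Lst n n. finite (Cl xs T)"
    proof
      fix xs
      have "Cl xs T \<subseteq> Pow (Dx xs \<union> Mx xs)" by (auto simp: Cl_def)
      then show "finite (Cl xs T)" using finite_Dx finite_Mx finite_subset by blast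
    qed
    show "\<forall>xs\<in>Lst n n. \<forall>j\<in>Lst n n. xs \<noteq> j \<longrightarrow> Cl xs T \<inter> Cl j T = {}"
      using Cl_disj by blast
  qed simp
  also have "\<dots> = (\<Sum>xs\<in>Lst n n. card (Dx xs) choose (T - n))"
    by (rule sum.cong[OF refl]) (use assms in \<open>auto simp: card_Cl Lst_def\<close>)
  finally show ?thesis .
qed

lemma ibinom_nat: "ibinom (int a) (int b) = int (a choose b)"
  unfolding ibinom_def by (auto simp: binomial_eq_0)

lemma alpha_eq: assumes n1: "n \<ge> 1" and nT: "n \<le> T"
  shows "int (card (Gs n T)) = alpha_TV n T"
proof -
  define g where "g m = ibinom (int m - int n) (int T - int n)" for m
  have "int (card (Gs n T)) = (\<Sum>xs\<in>Lst n n. g (sum_list xs))"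
    unfolding card_Gs[OF nT] of_nat_sum
  proof (rule sum.cong[OF refl])
    fix xs assume xs: "xs \<in> Lst n n"
    then have "card (Dx xs) + n = sum_list xs" using card_Dx[of xs n] by (simp add: Lst_def)
    then have "int (sum_list xs) = int (card (Dx xs)) + int n" by (metis of_nat_add)
    then have "int (sum_list xs) - int n = int (card (Dx xs))" by linarith
    moreover have "int T - int n = int (T - n)" using nT by (simp add: of_nat_diff)
    ultimately show "int (card (Dx xs) choose (T - n)) = g (sum_list xs)"
      unfolding g_def by (simp only: ibinom_nat)
  qed
  also have "\<dots> = (\<Sum>m=0..n*n. g m * int (Ncnt n n m))" by (rule group_Lst)
  also have "\<dots> = (\<Sum>m=0..n*n. g m * Ff n n (int m))"
  proof (rule sum.cong[OF refl])
    fix m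
    obtain k where k: "n = Suc k" using n1 by (cases n) auto
    have "int (Ncnt n (Suc k) m) = Ff n (Suc k) (int m)" by (rule Ncnt_formula)
    then have "int (Ncnt n n m) = Ff n n (int m)" using k by simp
    then show "g m * int (Ncnt n n m) = g m * Ff n n (int m)" by simp
  qed
  also have "\<dots> = (\<Sum>m=n..n^2. g m * Ff n n (int m))"
  proof (rule sum.mono_neutral_right)
    show "{n..n^2} \<subseteq> {0..n*n}" by (auto simp: power2_eq_square)
    show "\<forall>i\<in>{0..n * n} - {n..n\<^sup>2}. g i * Ff n n (int i) = 0"
    proof
      fix i assume "i \<in> {0..n * n} - {n..n\<^sup>2}"
      then have "i < n" by (auto simp: power2_eq_square)
      then have "int i - int n < int T - int n" using nT by linarith
      then have "g i = 0" unfolding g_def ibinom_def by simp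
      then show "g i * Ff n n (int i) = 0" by simp
    qed
  qed simp
  also have "\<dots> = alpha_TV n T"
    unfolding alpha_TV_def Ff_def g_def atMost_atLeast0 ..
  finally show ?thesis .
qed


lemma TV_eq: "TV_autos n \<Sigma> T = PiE_dflt \<Sigma> {} (\<lambda>_. {B. B \<subseteq> {0..<n}\<times>{0..<n} \<and> card B = T})"
  unfolding TV_autos_def PiE_dflt_def by auto

lemma TV_total_eq: "TV_autos n \<Sigma> T \<inter> {\<delta>. total_aut n \<Sigma> \<delta>} = PiE_dflt \<Sigma> {} (\<lambda>_. Gs n T)"
  unfolding TV_autos_def PiE_dflt_def Gs_def total_aut_def by auto

theorem theorem9p1:
  fixes n :: nat and \<Sigma> :: "'a set" and td :: real and T :: nat
  assumes "n \<ge> 1" and "finite \<Sigma>" and "td > 0"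
    and "T = nat \<lfloor>real n * td\<rfloor>" and "n \<le> T" and "T \<le> n^2"
  shows "U_prob n \<Sigma> td = (real_of_int (alpha_TV n T) / real (beta_TV n T)) ^ card \<Sigma>"
proof -
  define K where "K = {B. B \<subseteq> {0..<n}\<times>{0..<n} \<and> card B = T}"
  have cK: "card K = beta_TV n T"
    unfolding K_def beta_TV_def using n_subsets[of "{0..<n}\<times>{0..<n}" T]
    by (simp add: power2_eq_square)
  have bpos: "beta_TV n T > 0" unfolding beta_TV_def using assms(6) by simp
  have fK: "finite K" unfolding K_def by (rule finite_subset[of _ "Pow ({0..<n}\<times>{0..<n})"]) auto
  have fG: "finite (Gs n T)" unfolding Gs_def by (rule finite_subset[of _ "Pow ({0..<n}\<times>{0..<n})"]) auto
  have S: "TV_autos n \<Sigma> T = PiE_dflt \<Sigma> {} (\<lambda>_. K)" unfolding K_def by (rule TV_eq)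
  have cS: "card (TV_autos n \<Sigma> T) = beta_TV n T ^ card \<Sigma>"
    unfolding S using card_PiE_dflt[OF assms(2), of "\<lambda>_. K" "{}"] fK cK by simp
  have finS: "finite (TV_autos n \<Sigma> T)" unfolding S using fK assms(2) by auto
  have neS: "TV_autos n \<Sigma> T \<noteq> {}"
  proof
    assume "TV_autos n \<Sigma> T = {}"
    then have "card (TV_autos n \<Sigma> T) = 0" by simp
    then show False using cS bpos by simp
  qed
  have cI: "card (TV_autos n \<Sigma> T \<inter> {\<delta>. total_aut n \<Sigma> \<delta>}) = card (Gs n T) ^ card \<Sigma>"
    unfolding TV_total_eq using card_PiE_dflt[OF assms(2), of "\<lambda>_. Gs n T" "{}"] fG by simp
  have "U_prob n \<Sigma> td = card (TV_autos n \<Sigma> T \<inter> {\<delta>. total_aut n \<Sigma> \<delta>}) / card (TV_autos n \<Sigma> T)"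
    unfolding U_prob_def TV_random_aut_def assms(4)[symmetric]
    by (rule measure_pmf_of_set[OF neS finS])
  also have "\<dots> = real (card (Gs n T)) ^ card \<Sigma> / real (beta_TV n T) ^ card \<Sigma>"
    unfolding cI cS by simp
  also have "\<dots> = (real (card (Gs n T)) / real (beta_TV n T)) ^ card \<Sigma>"
    by (simp add: power_divide)
  also have "real (card (Gs n T)) = real_of_int (alpha_TV n T)"
    using alpha_eq[OF assms(1) assms(5)] by (metis of_int_of_nat_eq)
  finally show ?thesis .
qed

end
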